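(* Let $\mathbb{C}$ be a locally small category and $\mathbb{C}_{\mathit{fin}}$ a full subcategory satisfying (C1)–(C5) below. Let $F\in\mathrm{Ob}(\mathbb{C})$ be a locally finite object whose automorphisms are finitely separated. Then $\mathrm{Aut}(F)$ endowed with the topology $\tau_F$ is a Hausdorff topological group.
   Context: Write $A\to B$ if $\hom(A,B)\ne\varnothing$. Conditions: (C1) all morphisms of $\mathbb{C}$ are monomorphisms; (C2) $\mathrm{Ob}(\mathbb{C}_{\mathit{fin}})$ is a set; (C3) $\hom(A,B)$ is finite for $A,B\in\mathrm{Ob}(\mathbb{C}_{\mathit{fin}})$; (C4) for every $F\in\mathrm{Ob}(\mathbb{C})$ there is $A\in\mathrm{Ob}(\mathbb{C}_{\mathit{fin}})$ with $A\to F$; (C5) for every $B\in\mathrm{Ob}(\mathbb{C}_{\mathit{fin}})$ the set $\{A\in\mathrm{Ob}(\mathbb{C}_{\mathit{fin}}):A\to B\}$ is finite. $F$ is locally finite if for all $A,B\in\mathrm{Ob}(\mathbb{C}_{\mathit{fin}})$, $e\in\hom(A,F)$, $f\in\hom(B,F)$ there exist $D\in\mathrm{Ob}(\mathbb{C}_{\mathit{fin}})$, $r\in\hom(D,F)$, $p\in\hom(A,D)$, $q\in\hom(B,D)$ with $r\cdot p=e$, $r\cdot q=f$, such that for every $H\in\mathrm{Ob}(\mathbb{C})$, $r'\in\hom(H,F)$, $p'\in\hom(A,H)$, $q'\in\hom(B,H)$ with $r'\cdot p'=e$, $r'\cdot q'=f$ there is $s\in\hom(D,H)$ with $r'\cdot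 s=r$, $s\cdot p=p'$, $s\cdot q=q'$. The automorphisms of $F$ are finitely separated if for all $f\ne g$ in $\mathrm{Aut}(F)$ there are $A\in\mathrm{Ob}(\mathbb{C}_{\mathit{fin}})$ and $e\in\hom(A,F)$ with $f\cdot e\ne g\cdot e$. $\tau_F$ is the topology on $\mathrm{Aut}(F)$ having as a base the sets $N_F(e_1,e_2)=\{f\in\mathrm{Aut}(F):f\cdot e_1=e_2\}$, $A\in\mathrm{Ob}(\mathbb{C}_{\mathit{fin}})$, $A\to F$, $e_1,e_2\in\hom(A,F)$. *)

theory Defs
  imports "HOL-Analysis.Analysis" "HOL-Algebra.Group"
begin

record ('o, 'm) cat =
  Ob  :: "'o set"
  Ar  :: "'m set"
  Dom :: "'m \<Rightarrow> 'o"
  Cod :: "'m \<Rightarrow> 'o"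
  Cmp :: "'m \<Rightarrow> 'm \<Rightarrow> 'm"   (* Cmp C g f = g \<cdot> f  (first f, then g) *)
  Idt :: "'o \<Rightarrow> 'm"

definition category :: "('o, 'm) cat \<Rightarrow> bool" where
  "category C \<longleftrightarrow>
     (\<forall>f\<in>Ar C. Dom C f \<in> Ob C \<and> Cod C f \<in> Ob C) \<and>
     (\<forall>A\<in>Ob C. Idt C A \<in> Ar C \<and> Dom C (Idt C A) = A \<and> Cod C (Idt C A) = A) \<and>
     (\<forall>f\<in>Ar C. \<forall>g\<in>Ar C. Cod C f = Dom C g \<longrightarrow>
         Cmp C g f \<in> Ar C \<and> Dom C (Cmp C g f) = Dom C f \<and> Cod C (Cmp C g f) = Cod C g) \<and>
     (\<forall>f\<in>Ar C. \<forall>g\<in>Ar C. \<forall>h\<in>Ar C. Cod C f = Dom C g \<longrightarrow> Cod C g = Dom C h \<longrightarrow>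
         Cmp C h (Cmp C g f) = Cmp C (Cmp C h g) f) \<and>
     (\<forall>f\<in>Ar C. Cmp C (Idt C (Cod C f)) f = f \<and> Cmp C f (Idt C (Dom C f)) = f)"

definition hom :: "('o, 'm) cat \<Rightarrow> 'o \<Rightarrow> 'o \<Rightarrow> 'm set" where
  "hom C A B = {f \<in> Ar C. Dom C f = A \<and> Cod C f = B}"

definition arrow_to :: "('o, 'm) cat \<Rightarrow> 'o \<Rightarrow> 'o \<Rightarrow> bool" where
  "arrow_to C A B \<longleftrightarrow> hom C A B \<noteq> {}"

definition cond_C1 :: "('o, 'm) cat \<Rightarrow> bool" where
  "cond_C1 C \<longleftrightarrow> (\<forall>X\<in>Ob C. \<forall>A\<in>Ob C. \<forall>B\<in>Ob C. \<forall>f\<in>hom C A B. \<forall>g\<in>hom C X A. \<forall>h\<in>hom C X A.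
       Cmp C f g = Cmp C f h \<longrightarrow> g = h)"

(* (C2) "Ob(C_fin) is a set" holds automatically in HOL: Fin :: 'o set. *)

definition cond_C3 :: "('o, 'm) cat \<Rightarrow> 'o set \<Rightarrow> bool" where
  "cond_C3 C Fin \<longleftrightarrow> (\<forall>A\<in>Fin. \<forall>B\<in>Fin. finite (hom C A B))"

definition cond_C4 :: "('o, 'm) cat \<Rightarrow> 'o set \<Rightarrow> bool" where
  "cond_C4 C Fin \<longleftrightarrow> (\<forall>F\<in>Ob C. \<exists>A\<in>Fin. arrow_to C A F)"

definition cond_C5 :: "('o, 'm) cat \<Rightarrow> 'o set \<Rightarrow> bool" where
  "cond_C5 C Fin \<longleftrightarrow> (\<forall>B\<in>Fin. finite {A \<in> Fin. arrow_to C A B})"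

definition locally_finite :: "('o, 'm) cat \<Rightarrow> 'o set \<Rightarrow> 'o \<Rightarrow> bool" where
  "locally_finite C Fin F \<longleftrightarrow>
    (\<forall>A\<in>Fin. \<forall>B\<in>Fin. \<forall>e\<in>hom C A F. \<forall>f\<in>hom C B F.
       \<exists>D\<in>Fin. \<exists>r\<in>hom C D F. \<exists>p\<in>hom C A D. \<exists>q\<in>hom C B D.
         Cmp C r p = e \<and> Cmp C r q = f \<and>
         (\<forall>H\<in>Ob C. \<forall>r'\<in>hom C H F. \<forall>p'\<in>hom C A H. \<forall>q'\<in>hom C B H.
            Cmp C r' p' = e \<and> Cmp C r' q' = f \<longrightarrow>
            (\<exists>s\<in>hom C D H. Cmp C r' s = r \<and> Cmp C s p = p' \<and> Cmp C s q = q')))"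

definition Aut :: "('o, 'm) cat \<Rightarrow> 'o \<Rightarrow> 'm set" where
  "Aut C F = {f \<in> hom C F F. \<exists>g\<in>hom C F F. Cmp C g f = Idt C F \<and> Cmp C f g = Idt C F}"

definition Aut_group :: "('o, 'm) cat \<Rightarrow> 'o \<Rightarrow> 'm monoid" where
  "Aut_group C F = \<lparr>carrier = Aut C F, mult = (\<lambda>f g. Cmp C f g), one = Idt C F\<rparr>"

definition fin_separated :: "('o, 'm) cat \<Rightarrow> 'o set \<Rightarrow> 'o \<Rightarrow> bool" where
  "fin_separated C Fin F \<longleftrightarrow>
    (\<forall>f\<in>Aut C F. \<forall>g\<in>Aut C F. f \<noteq> g \<longrightarrow>
       (\<exists>A\<in>Fin. \<exists>e\<in>hom C A F. Cmp C f e \<noteq> Cmp C g e))"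

definition N_F :: "('o, 'm) cat \<Rightarrow> 'o \<Rightarrow> 'm \<Rightarrow> 'm \<Rightarrow> 'm set" where
  "N_F C F e1 e2 = {f \<in> Aut C F. Cmp C f e1 = e2}"

definition tau :: "('o, 'm) cat \<Rightarrow> 'o set \<Rightarrow> 'o \<Rightarrow> 'm topology" where
  "tau C Fin F = topology_generated_by
     {N_F C F e1 e2 | A e1 e2. A \<in> Fin \<and> arrow_to C A F \<and> e1 \<in> hom C A F \<and> e2 \<in> hom C A F}"

definition Hausdorff_topological_group :: "('a, 'b) monoid_scheme \<Rightarrow> 'a topology \<Rightarrow> bool" where
  "Hausdorff_topological_group G T \<longleftrightarrow>
     group G \<and> topspace T = carrier G \<and>
     continuous_map (prod_topology T T) T (\<lambda>(x, y). x \<otimes>\<^bsub>G\<^esub> y) \<and>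
     continuous_map T T (\<lambda>x. inv\<^bsub>G\<^esub> x) \<and>
     Hausdorff_space T"

end

theory Submission
  imports Defs
begin

lemma cat_comp:
  "category C \<Longrightarrow> f \<in> hom C A B \<Longrightarrow> g \<in> hom C B D \<Longrightarrow> Cmp C g f \<in> hom C A D"
  unfolding category_def hom_def by auto

lemma cat_assoc:
  "category C \<Longrightarrow> f \<in> hom C A B \<Longrightarrow> g \<in> hom C B D \<Longrightarrow> h \<in> hom C D E \<Longrightarrow>
   Cmp C h (Cmp C g f) = Cmp C (Cmp C h g) f"
  unfolding category_def hom_def by auto

lemma cat_id: "category C \<Longrightarrow> A \<in> Ob C \<Longrightarrow> Idt C A \<in> hom C A A"
  unfolding category_def hom_def by auto

lemma cat_idl: "category C \<Longrightarrow> f \<in> hom C A B \<Longrightarrow> Cmp C (Idt C B) f = f"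
  unfolding category_def hom_def by auto

lemma cat_idr: "category C \<Longrightarrow> f \<in> hom C A B \<Longrightarrow> Cmp C f (Idt C A) = f"
  unfolding category_def hom_def by auto

lemma Aut_hom: "f \<in> Aut C F \<Longrightarrow> f \<in> hom C F F"
  unfolding Aut_def by auto

lemma Aut_group_is_group:
  assumes C: "category C" and F: "F \<in> Ob C"
  shows "group (Aut_group C F)"
proof (rule groupI)
  fix x y assume x: "x \<in> carrier (Aut_group C F)" and y: "y \<in> carrier (Aut_group C F)"
  from x obtain x' where x': "x' \<in> hom C F F" "Cmp C x' x = Idt C F" "Cmp C x x' = Idt C F" "x \<in> hom C F F"
    by (auto simp: Aut_group_def Aut_def)
  from y obtain y' where y': "y' \<in> hom C F F" "Cmp C y' y = Idt C F" "Cmp C y y' = Idt C F" "y \<in> hom C F F"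
    by (auto simp: Aut_group_def Aut_def)
  have yx: "Cmp C y' x' \<in> hom C F F" "Cmp C x y \<in> hom C F F"
    using cat_comp[OF C x'(1) y'(1)] cat_comp[OF C y'(4) x'(4)] by auto
  have 1: "Cmp C (Cmp C y' x') (Cmp C x y) = Idt C F"
    using cat_assoc[OF C y'(4) x'(4) yx(1)] cat_assoc[OF C x'(4) x'(1) y'(1)] x' y'
      cat_idr[OF C y'(1)] by simp
  have xy: "Cmp C x y \<in> hom C F F" "Cmp C y' x' \<in> hom C F F"
    using yx by auto
  have 2: "Cmp C (Cmp C x y) (Cmp C y' x') = Idt C F"
    using cat_assoc[OF C x'(1) y'(1) xy(1)] cat_assoc[OF C y'(1) y'(4) x'(4)] x' y'
      cat_idr[OF C x'(4)] by simp
  show "x \<otimes>\<^bsub>Aut_group C F\<^esub> y \<in> carrier (Aut_group C F)"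
    using x' y' C 1 2 yx by (auto simp: Aut_group_def Aut_def)
next
  show "\<one>\<^bsub>Aut_group C F\<^esub> \<in> carrier (Aut_group C F)"
    using C F cat_id[OF C F] by (auto simp: Aut_group_def Aut_def cat_idl)
next
  fix x y z assume "x \<in> carrier (Aut_group C F)" "y \<in> carrier (Aut_group C F)" "z \<in> carrier (Aut_group C F)"
  then show "x \<otimes>\<^bsub>Aut_group C F\<^esub> y \<otimes>\<^bsub>Aut_group C F\<^esub> z = x \<otimes>\<^bsub>Aut_group C F\<^esub> (y \<otimes>\<^bsub>Aut_group C F\<^esub> z)"
    using C by (auto simp: Aut_group_def Aut_def cat_assoc)
next
  fix x assume "x \<in> carrier (Aut_group C F)"
  then show "\<one>\<^bsub>Aut_group C F\<^esub> \<otimes>\<^bsub>Aut_group C F\<^esub> x = x"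
    using C by (auto simp: Aut_group_def Aut_def cat_idl)
next
  fix x assume x: "x \<in> carrier (Aut_group C F)"
  from x obtain x' where x': "x' \<in> hom C F F" "Cmp C x' x = Idt C F" "Cmp C x x' = Idt C F" "x \<in> hom C F F"
    by (auto simp: Aut_group_def Aut_def)
  have "x' \<in> Aut C F" using x' by (auto simp: Aut_def)
  then show "\<exists>y\<in>carrier (Aut_group C F). y \<otimes>\<^bsub>Aut_group C F\<^esub> x = \<one>\<^bsub>Aut_group C F\<^esub>"
    using x' by (auto simp: Aut_group_def)
qed

lemma continuous_map_generated:
  assumes "\<And>x. x \<in> topspace X \<Longrightarrow> f x \<in> \<Union>S"
    and "\<And>U. U \<in> S \<Longrightarrow> openin X {x \<in> topspace X. f x \<in> U}"
  shows "continuous_map X (topology_generated_by S) f"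
  unfolding continuous_map_def
proof (intro conjI allI impI)
  show "f \<in> topspace X \<rightarrow> topspace (topology_generated_by S)" using assms(1) by simp
  fix U assume "openin (topology_generated_by S) U"
  then have "generate_topology_on S U" by (rule openin_topology_generated_by)
  then show "openin X {x \<in> topspace X. f x \<in> U}"
  proof induct
    case Empty then show ?case by simp
  next
    case (Int a b)
    then have "openin X ({x \<in> topspace X. f x \<in> a} \<inter> {x \<in> topspace X. f x \<in> b})" by blast
    moreover have "{x \<in> topspace X. f x \<in> a \<inter> b} = {x \<in> topspace X. f x \<in> a} \<inter> {x \<in> topspace X. f x \<in> b}" by blast
    ultimately show ?case by simp
  next
    case (UN K)
    have "{x \<in> topspace X. f x \<in> \<Union>K} = (\<Union>k\<in>K. {x \<in> topspace X. f x \<in> k})" by blast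
    then show ?case using UN by (auto intro!: openin_Union)
  next
    case (Basis s) then show ?case using assms(2) by simp
  qed
qed

theorem lemma4p3:
  fixes C :: "('o, 'm) cat" and Fin :: "'o set" and F :: 'o
  assumes "category C"
    and "Fin \<subseteq> Ob C"
    and "cond_C1 C"
    and "cond_C3 C Fin"
    and "cond_C4 C Fin"
    and "cond_C5 C Fin"
    and "F \<in> Ob C"
    and "locally_finite C Fin F"
    and "fin_separated C Fin F"
  shows "Hausdorff_topological_group (Aut_group C F) (tau C Fin F)"
proof -
  note C = assms(1) and F = assms(7)
  define S where "S = {N_F C F e1 e2 | A e1 e2. A \<in> Fin \<and> arrow_to C A F \<and> e1 \<in> hom C A F \<and> e2 \<in> hom C A F}"
  have T: "tau C Fin F = topology_generated_by S" by (simp add: tau_def S_def)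
  have G: "group (Aut_group C F)" by (rule Aut_group_is_group[OF C F])
  have carr: "carrier (Aut_group C F) = Aut C F" by (simp add: Aut_group_def)
  have mult: "\<And>x y. x \<otimes>\<^bsub>Aut_group C F\<^esub> y = Cmp C x y" by (simp add: Aut_group_def)
  have mc: "\<And>x y. x \<in> Aut C F \<Longrightarrow> y \<in> Aut C F \<Longrightarrow> Cmp C x y \<in> Aut C F"
    using monoid.m_closed[OF group.is_monoid[OF G]] carr mult by metis
  have one: "\<one>\<^bsub>Aut_group C F\<^esub> = Idt C F" by (simp add: Aut_group_def)
  have invc: "\<And>f. f \<in> Aut C F \<Longrightarrow> inv\<^bsub>Aut_group C F\<^esub> f \<in> Aut C F"
    using group.inv_closed[OF G] carr by metis
  have linv: "\<And>f. f \<in> Aut C F \<Longrightarrow> Cmp C (inv\<^bsub>Aut_group C F\<^esub> f) f = Idt C F"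
    using group.l_inv[OF G] carr mult one by metis
  have rinv: "\<And>f. f \<in> Aut C F \<Longrightarrow> Cmp C f (inv\<^bsub>Aut_group C F\<^esub> f) = Idt C F"
    using group.r_inv[OF G] carr mult one by metis
  have NS: "N_F C F e1 e2 \<in> S" if "A \<in> Fin" "e1 \<in> hom C A F" "e2 \<in> hom C A F" for A e1 e2
    using that unfolding S_def arrow_to_def by blast
  have NO: "openin (tau C Fin F) (N_F C F e1 e2)" if "A \<in> Fin" "e1 \<in> hom C A F" "e2 \<in> hom C A F" for A e1 e2
    unfolding T by (rule topology_generated_by_Basis[OF NS[OF that]])
  have US: "\<Union>S = Aut C F"
  proof
    show "\<Union>S \<subseteq> Aut C F" unfolding S_def N_F_def by auto
    show "Aut C F \<subseteq> \<Union>S"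
    proof
      fix f assume f: "f \<in> Aut C F"
      obtain A e where A: "A \<in> Fin" "e \<in> hom C A F"
        using assms(5) F unfolding cond_C4_def arrow_to_def by blast
      have "Cmp C f e \<in> hom C A F" using cat_comp[OF C A(2) Aut_hom[OF f]] .
      then have "f \<in> N_F C F e (Cmp C f e)" using f by (simp add: N_F_def)
      then show "f \<in> \<Union>S" using NS[OF A(1,2) \<open>Cmp C f e \<in> hom C A F\<close>] by blast
    qed
  qed
  have top: "topspace (tau C Fin F) = Aut C F" unfolding T using US by simp
  have Sform: "\<exists>A e1 e2. U = N_F C F e1 e2 \<and> A \<in> Fin \<and> e1 \<in> hom C A F \<and> e2 \<in> hom C A F" if "U \<in> S" for U
    using that unfolding S_def by blast
  have cm: "continuous_map (prod_topology (tau C Fin F) (tau C Fin F)) (tau C Fin F)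
     (\<lambda>(x, y). x \<otimes>\<^bsub>Aut_group C F\<^esub> y)"
    unfolding T
  proof (rule continuous_map_generated)
    fix z assume "z \<in> topspace (prod_topology (topology_generated_by S) (topology_generated_by S))"
    then show "(case z of (x, y) \<Rightarrow> x \<otimes>\<^bsub>Aut_group C F\<^esub> y) \<in> \<Union>S"
      using US mc by (auto simp: mult)
  next
    fix U assume "U \<in> S"
    then obtain A e1 e2 where U: "U = N_F C F e1 e2" "A \<in> Fin" "e1 \<in> hom C A F" "e2 \<in> hom C A F"
      using Sform by blast
    show "openin (prod_topology (topology_generated_by S) (topology_generated_by S))
        {z \<in> topspace (prod_topology (topology_generated_by S) (topology_generated_by S)).
           (case z of (x, y) \<Rightarrow> x \<otimes>\<^bsub>Aut_group C F\<^esub> y) \<in> U}"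
      unfolding openin_prod_topology_alt
    proof (intro allI impI)
      fix f g assume fg: "(f, g) \<in> {z \<in> topspace (prod_topology (topology_generated_by S) (topology_generated_by S)).
           (case z of (x, y) \<Rightarrow> x \<otimes>\<^bsub>Aut_group C F\<^esub> y) \<in> U}"
      then have f: "f \<in> Aut C F" and g: "g \<in> Aut C F" and fge: "Cmp C (Cmp C f g) e1 = e2"
        using US U by (auto simp: mult N_F_def)
      have ge: "Cmp C g e1 \<in> hom C A F" using cat_comp[OF C U(3) Aut_hom[OF g]] .
      have fe: "Cmp C f (Cmp C g e1) = e2"
        using fge cat_assoc[OF C U(3) Aut_hom[OF g] Aut_hom[OF f]] by simp
      show "\<exists>P Q. openin (topology_generated_by S) P \<and> openin (topology_generated_by S) Q \<and> f \<in> P \<and> g \<in> Q \<and>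
          P \<times> Q \<subseteq> {z \<in> topspace (prod_topology (topology_generated_by S) (topology_generated_by S)).
           (case z of (x, y) \<Rightarrow> x \<otimes>\<^bsub>Aut_group C F\<^esub> y) \<in> U}"
      proof (intro exI conjI)
        show "openin (topology_generated_by S) (N_F C F (Cmp C g e1) e2)"
          by (rule topology_generated_by_Basis[OF NS[OF U(2) ge U(4)]])
        show "openin (topology_generated_by S) (N_F C F e1 (Cmp C g e1))"
          by (rule topology_generated_by_Basis[OF NS[OF U(2) U(3) ge]])
        show "f \<in> N_F C F (Cmp C g e1) e2" using f fe by (simp add: N_F_def)
        show "g \<in> N_F C F e1 (Cmp C g e1)" using g by (simp add: N_F_def)
        show "N_F C F (Cmp C g e1) e2 \<times> N_F C F e1 (Cmp C g e1) \<subseteq> {z \<in> topspace (prod_topology (topology_generated_by S) (topology_generated_by S)).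
           (case z of (x, y) \<Rightarrow> x \<otimes>\<^bsub>Aut_group C F\<^esub> y) \<in> U}"
        proof
          fix z assume "z \<in> N_F C F (Cmp C g e1) e2 \<times> N_F C F e1 (Cmp C g e1)"
          then obtain f' g' where z: "z = (f', g')" and f': "f' \<in> N_F C F (Cmp C g e1) e2" and g': "g' \<in> N_F C F e1 (Cmp C g e1)"
            by blast
          have f'A: "f' \<in> Aut C F" "Cmp C f' (Cmp C g e1) = e2" using f' by (auto simp: N_F_def)
          have g'A: "g' \<in> Aut C F" "Cmp C g' e1 = Cmp C g e1" using g' by (auto simp: N_F_def)
          have "Cmp C (Cmp C f' g') e1 = e2"
            using cat_assoc[OF C U(3) Aut_hom[OF g'A(1)] Aut_hom[OF f'A(1)]] f'A g'A by simp
          moreover have "Cmp C f' g' \<in> Aut C F" using mc f'A g'A by simp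
          ultimately show "z \<in> {z \<in> topspace (prod_topology (topology_generated_by S) (topology_generated_by S)).
           (case z of (x, y) \<Rightarrow> x \<otimes>\<^bsub>Aut_group C F\<^esub> y) \<in> U}"
            using U z f'A g'A US by (simp add: mult N_F_def)
        qed
      qed
    qed
  qed
  have ci: "continuous_map (tau C Fin F) (tau C Fin F) (\<lambda>x. inv\<^bsub>Aut_group C F\<^esub> x)"
    unfolding T
  proof (rule continuous_map_generated)
    fix x assume "x \<in> topspace (topology_generated_by S)"
    then show "inv\<^bsub>Aut_group C F\<^esub> x \<in> \<Union>S" using US G carr group.inv_closed by fastforce
  next
    fix U assume "U \<in> S"
    then obtain A e1 e2 where U: "U = N_F C F e1 e2" "A \<in> Fin" "e1 \<in> hom C A F" "e2 \<in> hom C A F"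
      using Sform by blast
    have "{x \<in> topspace (topology_generated_by S). inv\<^bsub>Aut_group C F\<^esub> x \<in> U} = N_F C F e2 e1"
    proof safe
      fix f assume f: "f \<in> topspace (topology_generated_by S)" "inv\<^bsub>Aut_group C F\<^esub> f \<in> U"
      have fA: "f \<in> Aut C F" using f US by simp
      let ?i = "inv\<^bsub>Aut_group C F\<^esub> f"
      have i: "?i \<in> Aut C F" "Cmp C f ?i = Idt C F"
        using fA invc rinv by auto
      have "Cmp C ?i e1 = e2" using f U by (simp add: N_F_def)
      then have "Cmp C f e2 = Cmp C (Cmp C f ?i) e1"
        using cat_assoc[OF C U(3) Aut_hom[OF i(1)] Aut_hom[OF fA]] by simp
      also have "\<dots> = e1" using i cat_idl[OF C U(3)] by simp
      finally show "f \<in> N_F C F e2 e1" using fA by (simp add: N_F_def)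
    next
      fix f assume f: "f \<in> N_F C F e2 e1"
      then show "f \<in> topspace (topology_generated_by S)" using US by (simp add: N_F_def)
      have fA: "f \<in> Aut C F" "Cmp C f e2 = e1" using f by (auto simp: N_F_def)
      let ?i = "inv\<^bsub>Aut_group C F\<^esub> f"
      have i: "?i \<in> Aut C F" "Cmp C ?i f = Idt C F"
        using fA invc linv by auto
      have "Cmp C ?i e1 = Cmp C ?i (Cmp C f e2)" using fA by simp
      also have "\<dots> = Cmp C (Cmp C ?i f) e2"
        using cat_assoc[OF C U(4) Aut_hom[OF fA(1)] Aut_hom[OF i(1)]] .
      also have "\<dots> = e2" using i cat_idl[OF C U(4)] by simp
      finally show "?i \<in> U" using U i by (simp add: N_F_def)
    qed
    then show "openin (topology_generated_by S) {x \<in> topspace (topology_generated_by S). inv\<^bsub>Aut_group C F\<^esub> x \<in> U}"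
      using NO[OF U(2) U(4) U(3)] T by simp
  qed
  have hs: "Hausdorff_space (tau C Fin F)"
    unfolding Hausdorff_space_def
  proof (intro allI impI)
    fix f g assume fg: "f \<in> topspace (tau C Fin F) \<and> g \<in> topspace (tau C Fin F) \<and> f \<noteq> g"
    then have f: "f \<in> Aut C F" and g: "g \<in> Aut C F" and ne: "f \<noteq> g" using top by auto
    obtain A e where A: "A \<in> Fin" "e \<in> hom C A F" and d: "Cmp C f e \<noteq> Cmp C g e"
      using assms(9) f g ne unfolding fin_separated_def by blast
    have fe: "Cmp C f e \<in> hom C A F" using cat_comp[OF C A(2) Aut_hom[OF f]] .
    have ge: "Cmp C g e \<in> hom C A F" using cat_comp[OF C A(2) Aut_hom[OF g]] .
    show "\<exists>U V. openin (tau C Fin F) U \<and> openin (tau C Fin F) V \<and> f \<in> U \<and> g \<in> V \<and> disjnt U V"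
    proof (intro exI conjI)
      show "openin (tau C Fin F) (N_F C F e (Cmp C f e))" by (rule NO[OF A fe])
      show "openin (tau C Fin F) (N_F C F e (Cmp C g e))" by (rule NO[OF A ge])
      show "f \<in> N_F C F e (Cmp C f e)" using f by (simp add: N_F_def)
      show "g \<in> N_F C F e (Cmp C g e)" using g by (simp add: N_F_def)
      show "disjnt (N_F C F e (Cmp C f e)) (N_F C F e (Cmp C g e))"
        using d by (auto simp: disjnt_def N_F_def)
    qed
  qed
  show ?thesis unfolding Hausdorff_topological_group_def
    using G top carr cm ci hs by simp
qed

end
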